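(* Let $P(z) \in \mathbb{C}[z, z^{-1}]$ be a Laurent polynomial with a root of order one at $z_0 = e^{2\pi i t_0}$ (where $t_0\in\mathbb{R}$), and let $P'$ denote its derivative with respect to $z$. Then for all sufficiently small $\delta > 0$, \[ \lim_{k\to\infty} \frac{1}{k!} \left| \int_{t_0-\delta}^{t_0+\delta} \log^k \left|P\left(e^{2\pi i t}\right)\right| \, dt \right| = \frac{1}{\pi \left|P'\left(e^{2\pi i t_0}\right)\right|}. \]
   Context: $\log^k x$ means $(\log x)^k$. *)

theory Defs
  imports "HOL-Analysis.Analysis" "HOL-Computational_Algebra.Polynomial"
begin

text \<open>A Laurent polynomial P in C[z, z^-1] is represented as P(z) = z^(-m) * Q(z)
  with Q a complex polynomial and m a natural number (every Laurent polynomial has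
  this form). As a function on C - {0}:\<close>
definition laurent_poly :: "complex poly \<Rightarrow> nat \<Rightarrow> complex \<Rightarrow> complex" where
  "laurent_poly Q m z = poly Q z / z ^ m"

text \<open>Order of the root of the Laurent polynomial z^(-m) Q(z) at a nonzero point z0:
  since z^(-m) is a unit near z0, it is the root multiplicity of Q at z0.\<close>
definition laurent_root_order :: "complex poly \<Rightarrow> nat \<Rightarrow> complex \<Rightarrow> nat" where
  "laurent_root_order Q m z0 = order z0 Q"

end

theory Submission
  imports Defs "HOL-Real_Asymp.Real_Asymp"
begin

fun G :: "real \<Rightarrow> nat \<Rightarrow> real \<Rightarrow> real" where
  "G c 0 s = s"
| "G c (Suc k) s = s * (- ln (c * s)) ^ Suc k + real (Suc k) * G c k s"

lemma G_0: "G c k 0 = 0"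
  by (induction k) auto

lemma G_deriv:
  assumes "c > 0" "s > 0"
  shows "(G c k has_real_derivative (- ln (c * s)) ^ k) (at s)"
proof (induction k)
  case 0 then show ?case by (auto intro!: derivative_eq_intros)
next
  case (Suc k)
  have d: "((\<lambda>s. s * (- ln (c * s)) ^ Suc k) has_real_derivative
     (- ln (c * s)) ^ Suc k - real (Suc k) * (- ln (c * s)) ^ k) (at s)"
  proof -
    have l: "((\<lambda>s. - ln (c * s)) has_real_derivative (- (1/s))) (at s)"
      using assms by (auto intro!: derivative_eq_intros simp: field_simps)
    have "((\<lambda>s. s * (- ln (c * s)) ^ Suc k) has_real_derivative
       1 * (- ln (c * s)) ^ Suc k + ((1 + of_nat k) * ((- (1/s)) * (- ln (c * s)) ^ k)) * s) (at s)"
      by (rule DERIV_mult[OF DERIV_ident DERIV_power_Suc[OF l]])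
    then show ?thesis
      by (rule DERIV_cong) (use assms in \<open>simp add: field_simps\<close>)
  qed
  show ?case
    using DERIV_add[OF d DERIV_cmult[OF Suc.IH, of "real (Suc k)"]]
    by (simp add: algebra_simps)
qed

lemma lim_s_pow_ln:
  fixes c :: real
  assumes "c > 0"
  shows "((\<lambda>s. s * (- ln (c * s)) ^ j) \<longlongrightarrow> 0) (at_right 0)"
proof -
  have lim1: "filterlim (\<lambda>s. c * s) (at_right 0) (at_right (0::real))"
    using assms by real_asymp
  have "filterlim (\<lambda>s. ln (c * s)) at_bot (at_right 0)"
    using filterlim_compose[OF ln_at_0 lim1] .
  then have "filterlim (\<lambda>s. - ln (c * s)) at_top (at_right 0)"
    by (simp add: filterlim_uminus_at_top)
  from filterlim_compose[OF tendsto_power_div_exp_0[of j] this]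
  have "((\<lambda>s. (- ln (c * s)) ^ j / exp (- ln (c * s))) \<longlongrightarrow> 0) (at_right 0)" by simp
  then have "((\<lambda>s. (1/c) * ((- ln (c * s)) ^ j / exp (- ln (c * s)))) \<longlongrightarrow> (1/c) * 0) (at_right 0)"
    by (rule tendsto_mult[OF tendsto_const])
  then have "((\<lambda>s. (1/c) * ((- ln (c * s)) ^ j / exp (- ln (c * s)))) \<longlongrightarrow> 0) (at_right 0)"
    by simp
  then show ?thesis
  proof (rule Lim_transform_eventually)
    show "\<forall>\<^sub>F s in at_right 0. 1 / c * ((- ln (c * s)) ^ j / exp (- ln (c * s))) = s * (- ln (c * s)) ^ j"
      using assms by (intro eventually_at_rightI[of 0 1]) (auto simp: exp_minus field_simps)
  qed
qed

lemma G_lim0: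
  fixes c :: real assumes "c > 0"
  shows "(G c k \<longlongrightarrow> 0) (at_right 0)"
proof (induction k)
  case 0 then show ?case by (simp add: tendsto_ident_at)
next
  case (Suc k)
  have "((\<lambda>s. s * (- ln (c * s)) ^ Suc k + real (Suc k) * G c k s) \<longlongrightarrow> 0 + real (Suc k) * 0) (at_right 0)"
    by (intro tendsto_add tendsto_mult lim_s_pow_ln assms tendsto_const Suc.IH)
  then show ?case by simp
qed

lemma G_cont:
  fixes c :: real assumes "c > 0" "e > 0"
  shows "continuous_on {0..e} (G c k)"
proof -
  have "continuous (at x within {0..e}) (G c k)" if x: "x \<in> {0..e}" for x
  proof (cases "x = 0")
    case True
    have "(G c k \<longlongrightarrow> G c k 0) (at_right 0)" using G_lim0[OF assms(1)] by (simp add: G_0)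
    then show ?thesis using True assms(2) by (simp add: continuous_within at_within_Icc_at_right)
  next
    case False
    then have "x > 0" using x by auto
    from DERIV_isCont[OF G_deriv[OF assms(1) this]] show ?thesis
      by (rule continuous_at_imp_continuous_at_within)
  qed
  then show ?thesis by (simp add: continuous_on_eq_continuous_within)
qed

lemma G_integral:
  fixes c :: real assumes "c > 0" "e > 0"
  shows "((\<lambda>s. (- ln (c * s)) ^ k) has_integral G c k e) {0..e}"
proof -
  have "((\<lambda>s. (- ln (c * s)) ^ k) has_integral G c k e - G c k 0) {0..e}"
  proof (rule fundamental_theorem_of_calculus_interior)
    show "0 \<le> e" using assms by simp
    show "continuous_on {0..e} (G c k)" by (rule G_cont[OF assms])
    show "(G c k has_vector_derivative (- ln (c * x)) ^ k) (at x)" if "x \<in> {0<..<e}" for x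
      using G_deriv[OF assms(1)] that by (simp add: has_real_derivative_iff_has_vector_derivative)
  qed
  then show ?thesis by (simp add: G_0)
qed

lemma G_fact: "G c k e / fact k = e * (\<Sum>j\<le>k. (- ln (c * e)) ^ j / fact j)"
proof (induction k)
  case 0 then show ?case by simp
next
  case (Suc k)
  have "G c (Suc k) e / fact (Suc k) = e * (- ln (c * e)) ^ Suc k / fact (Suc k) + G c k e / fact k"
    by (simp add: field_simps del: of_nat_Suc)
  then show ?case using Suc.IH by (simp add: algebra_simps)
qed

lemma G_limit:
  fixes c e :: real assumes "c > 0" "e > 0"
  shows "(\<lambda>k. G c k e / fact k) \<longlonglongrightarrow> 1 / c"
proof -
  define L where "L = - ln (c * e)"
  have "(\<lambda>n. \<Sum>j<n. L ^ j /\<^sub>R fact j) \<longlonglongrightarrow> exp L"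
    using exp_converges[of L] by (simp add: sums_def)
  then have "(\<lambda>n. \<Sum>j<Suc n. L ^ j /\<^sub>R fact j) \<longlonglongrightarrow> exp L"
    by (rule LIMSEQ_Suc)
  then have "(\<lambda>n. e * (\<Sum>j\<le>n. L ^ j / fact j)) \<longlonglongrightarrow> e * exp L"
    by (intro tendsto_mult tendsto_const) (simp add: lessThan_Suc_atMost divide_inverse_commute)
  moreover have "e * exp L = 1 / c" using assms by (simp add: L_def exp_minus field_simps)
  ultimately show ?thesis by (simp add: G_fact L_def)
qed

lemma spike0_integral: "integral {0..e} (f::real\<Rightarrow>real) = integral {0<..e} f"
proof (rule integral_spike_set)
  show "negligible {x \<in> {0..e} - {0<..e}. f x \<noteq> 0}"
    by (rule negligible_subset[of "{0}"]) auto
  show "negligible {x \<in> {0<..e} - {0..e}. f x \<noteq> 0}"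
    by (rule negligible_subset[of "{}"]) auto
qed

lemma spike0_integrable: "(f::real\<Rightarrow>real) integrable_on {0..e} \<longleftrightarrow> f integrable_on {0<..e}"
  by (rule integrable_spike_set_eq, rule negligible_subset[of "{0}"]) auto

lemma sandwich_eps:
  fixes h :: "real \<Rightarrow> real" and c r \<delta> :: real
  assumes c: "c > 0" and r: "0 < r" "r < c" and d: "\<delta> > 0"
    and lim: "((\<lambda>s. h s / s) \<longlongrightarrow> c) (at_right 0)"
  shows "\<exists>\<epsilon>. 0 < \<epsilon> \<and> \<epsilon> \<le> \<delta> \<and> (c + r) * \<epsilon> < 1 \<and>
     (\<forall>s\<in>{0<..\<epsilon>}. (c - r) * s \<le> h s \<and> h s \<le> (c + r) * s)"
proof -
  have "\<forall>\<^sub>F s in at_right 0. c - r < h s / s" by (rule order_tendstoD(1)[OF lim]) (use r in simp)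
  moreover have "\<forall>\<^sub>F s in at_right 0. h s / s < c + r" by (rule order_tendstoD(2)[OF lim]) (use r in simp)
  ultimately have "\<forall>\<^sub>F s in at_right 0. c - r < h s / s \<and> h s / s < c + r"
    by (rule eventually_conj)
  then obtain b where b: "b > 0" "\<And>s. 0 < s \<Longrightarrow> s < b \<Longrightarrow> c - r < h s / s \<and> h s / s < c + r"
    unfolding eventually_at_right_field by auto
  define \<epsilon> where "\<epsilon> = min (b/2) (min \<delta> (1 / (2 * (c + r))))"
  have cr: "c + r > 0" using c r by simp
  have e1: "\<epsilon> > 0" using b d cr by (simp add: \<epsilon>_def)
  have e2: "\<epsilon> \<le> \<delta>" by (simp add: \<epsilon>_def)
  have "\<epsilon> \<le> 1 / (2 * (c + r))" by (simp add: \<epsilon>_def)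
  then have "(c + r) * \<epsilon> \<le> (c + r) * (1 / (2 * (c + r)))"
    using cr by (intro mult_left_mono) auto
  also have "\<dots> = 1/2" using cr by simp
  finally have e3: "(c + r) * \<epsilon> < 1" by simp
  have "(c - r) * s \<le> h s \<and> h s \<le> (c + r) * s" if "s \<in> {0<..\<epsilon>}" for s
  proof -
    have s: "0 < s" "s < b" using that b(1) by (auto simp: \<epsilon>_def)
    from b(2)[OF s] s(1) show ?thesis by (simp add: field_simps)
  qed
  with e1 e2 e3 show ?thesis by blast
qed

lemma pow_bounds:
  fixes h :: "real \<Rightarrow> real" and c r \<epsilon> s :: real and k :: nat
  assumes "0 < r" "r < c" "(c + r) * \<epsilon> < 1" "s \<in> {0<..\<epsilon>}"
    "(c - r) * s \<le> h s" "h s \<le> (c + r) * s"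
  shows "(- ln ((c + r) * s)) ^ k \<le> (- ln (h s)) ^ k"
    "(- ln (h s)) ^ k \<le> (- ln ((c - r) * s)) ^ k"
    "0 \<le> - ln (h s)"
proof -
  have s: "0 < s" "s \<le> \<epsilon>" using assms(4) by auto
  have p1: "0 < (c - r) * s" using assms s by simp
  have p2: "0 < h s" using p1 assms(5) by linarith
  have "(c + r) * s \<le> (c + r) * \<epsilon>" using s assms by (intro mult_left_mono) auto
  then have lt1: "(c + r) * s < 1" using assms(3) by linarith
  have l1: "ln (h s) \<le> ln ((c + r) * s)" using p2 assms(6) by simp
  have l2: "ln ((c - r) * s) \<le> ln (h s)" using p1 assms(5) by simp
  have l3: "ln ((c + r) * s) < 0" using lt1 p1 p2 assms(6) by simp
  show "0 \<le> - ln (h s)" using l1 l3 by simp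
  show "(- ln ((c + r) * s)) ^ k \<le> (- ln (h s)) ^ k"
    by (rule power_mono) (use l1 l3 in auto)
  show "(- ln (h s)) ^ k \<le> (- ln ((c - r) * s)) ^ k"
    by (rule power_mono) (use l1 l2 l3 in auto)
qed

lemma inner_integrable:
  fixes h :: "real \<Rightarrow> real" and c r \<epsilon> :: real and k :: nat
  assumes "0 < r" "r < c" "0 < \<epsilon>" "(c + r) * \<epsilon> < 1"
    and b: "\<forall>s\<in>{0<..\<epsilon>}. (c - r) * s \<le> h s \<and> h s \<le> (c + r) * s"
    and cont: "continuous_on {0<..\<epsilon>} h"
  shows "(\<lambda>t. ln (h t) ^ k) integrable_on {0<..\<epsilon>}"
    "(\<lambda>t. (- ln (h t)) ^ k) integrable_on {0<..\<epsilon>}"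
    "G (c + r) k \<epsilon> \<le> integral {0<..\<epsilon>} (\<lambda>t. (- ln (h t)) ^ k)"
    "integral {0<..\<epsilon>} (\<lambda>t. (- ln (h t)) ^ k) \<le> G (c - r) k \<epsilon>"
proof -
  have pos: "h s > 0" if "s \<in> {0<..\<epsilon>}" for s
  proof -
    have "0 < (c - r) * s" using assms that by simp
    then show ?thesis using b that by force
  qed
  have I1: "((\<lambda>s. (- ln ((c - r) * s)) ^ k) has_integral G (c - r) k \<epsilon>) {0<..\<epsilon>}"
  proof -
    have H: "((\<lambda>s. (- ln ((c - r) * s)) ^ k) has_integral G (c - r) k \<epsilon>) {0..\<epsilon>}"
      by (rule G_integral) (use assms in auto)
    then have "(\<lambda>s. (- ln ((c - r) * s)) ^ k) integrable_on {0<..\<epsilon>}"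
      using spike0_integrable by blast
    moreover have "integral {0<..\<epsilon>} (\<lambda>s. (- ln ((c - r) * s)) ^ k) = G (c - r) k \<epsilon>"
      using integral_unique[OF H] spike0_integral by metis
    ultimately show ?thesis using integrable_integral by metis
  qed
  have I2: "((\<lambda>s. (- ln ((c + r) * s)) ^ k) has_integral G (c + r) k \<epsilon>) {0<..\<epsilon>}"
  proof -
    have H: "((\<lambda>s. (- ln ((c + r) * s)) ^ k) has_integral G (c + r) k \<epsilon>) {0..\<epsilon>}"
      by (rule G_integral) (use assms in auto)
    then have "(\<lambda>s. (- ln ((c + r) * s)) ^ k) integrable_on {0<..\<epsilon>}"
      using spike0_integrable by blast
    moreover have "integral {0<..\<epsilon>} (\<lambda>s. (- ln ((c + r) * s)) ^ k) = G (c + r) k \<epsilon>"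
      using integral_unique[OF H] spike0_integral by metis
    ultimately show ?thesis using integrable_integral by metis
  qed
  have meas: "(\<lambda>t. ln (h t) ^ k) \<in> borel_measurable (lebesgue_on {0<..\<epsilon>})"
  proof (rule continuous_imp_measurable_on_sets_lebesgue)
    show "continuous_on {0<..\<epsilon>} (\<lambda>t. ln (h t) ^ k)"
      by (intro continuous_intros cont) (metis pos less_irrefl)
  qed simp
  show int1: "(\<lambda>t. ln (h t) ^ k) integrable_on {0<..\<epsilon>}"
  proof (rule measurable_bounded_by_integrable_imp_integrable_real[OF meas])
    show "(\<lambda>s. (- ln ((c - r) * s)) ^ k) integrable_on {0<..\<epsilon>}" using I1 by blast
    show "{0<..\<epsilon>} \<in> sets lebesgue" by simp
    fix x assume x: "x \<in> {0<..\<epsilon>}"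
    have "\<bar>ln (h x) ^ k\<bar> = (- ln (h x)) ^ k"
      using pow_bounds(3)[OF assms(1,2,4) x] b x by (simp add: power_abs)
    also have "\<dots> \<le> (- ln ((c - r) * x)) ^ k"
      using pow_bounds(2)[OF assms(1,2,4) x] b x by simp
    finally show "\<bar>ln (h x) ^ k\<bar> \<le> (- ln ((c - r) * x)) ^ k" .
  qed
  have eq: "(\<lambda>t. (- ln (h t)) ^ k) = (\<lambda>t. (-1) ^ k * ln (h t) ^ k)"
    by (rule ext) (rule power_minus)
  have "(\<lambda>t. (-1) ^ k * ln (h t) ^ k) integrable_on {0<..\<epsilon>}"
    using integrable_on_cmult_left[OF int1, of "(-1)^k"] by simp
  then show int2: "(\<lambda>t. (- ln (h t)) ^ k) integrable_on {0<..\<epsilon>}"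
    unfolding eq .
  have "integral {0<..\<epsilon>} (\<lambda>s. (- ln ((c + r) * s)) ^ k) \<le> integral {0<..\<epsilon>} (\<lambda>t. (- ln (h t)) ^ k)"
  proof (rule integral_le)
    show "(\<lambda>s. (- ln ((c + r) * s)) ^ k) integrable_on {0<..\<epsilon>}" using I2 by blast
    show "(\<lambda>t. (- ln (h t)) ^ k) integrable_on {0<..\<epsilon>}" by (rule int2)
    fix x assume x: "x \<in> {0<..\<epsilon>}"
    show "(- ln ((c + r) * x)) ^ k \<le> (- ln (h x)) ^ k"
      using pow_bounds(1)[OF assms(1,2,4) x] b x by simp
  qed
  then show "G (c + r) k \<epsilon> \<le> integral {0<..\<epsilon>} (\<lambda>t. (- ln (h t)) ^ k)"
    using integral_unique[OF I2] by simp
  have "integral {0<..\<epsilon>} (\<lambda>t. (- ln (h t)) ^ k) \<le> integral {0<..\<epsilon>} (\<lambda>s. (- ln ((c - r) * s)) ^ k)"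
  proof (rule integral_le)
    show "(\<lambda>s. (- ln ((c - r) * s)) ^ k) integrable_on {0<..\<epsilon>}" using I1 by blast
    show "(\<lambda>t. (- ln (h t)) ^ k) integrable_on {0<..\<epsilon>}" by (rule int2)
    fix x assume x: "x \<in> {0<..\<epsilon>}"
    show "(- ln (h x)) ^ k \<le> (- ln ((c - r) * x)) ^ k"
      using pow_bounds(2)[OF assms(1,2,4) x] b x by simp
  qed
  then show "integral {0<..\<epsilon>} (\<lambda>t. (- ln (h t)) ^ k) \<le> G (c - r) k \<epsilon>"
    using integral_unique[OF I1] by simp
qed

lemma recip_bounds:
  fixes c r \<eta> :: real
  assumes c: "c > 0" and r: "0 < r" "r \<le> c/2" "r \<le> \<eta> * c^2 / 8"
  shows "1/(c - r) \<le> 1/c + \<eta>/4" "1/c - \<eta>/4 \<le> 1/(c + r)"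
proof -
  have cr: "c - r > 0" using c r by simp
  have e1: "1/(c - r) - 1/c = r/(c*(c - r))" using cr c by (simp add: field_simps)
  have "r/(c*(c - r)) \<le> r/(c*c/2)"
    by (rule divide_left_mono) (use c r cr in \<open>auto simp: field_simps\<close>)
  also have "r/(c*c/2) \<le> \<eta>/4"
    using c r by (subst pos_divide_le_eq) (auto simp: power2_eq_square field_simps)
  finally show "1/(c - r) \<le> 1/c + \<eta>/4" using e1 by linarith
  have cr2: "c + r > 0" using c r by simp
  have e2: "1/c - 1/(c + r) = r/(c*(c + r))" using cr2 c by (simp add: field_simps)
  have "r/(c*(c + r)) \<le> r/(c*c/2)"
  proof (rule divide_left_mono)
    have p: "0 < c*c" "0 < c*r" using c r by simp_all
    then show "c*c/2 \<le> c*(c + r)" by (simp add: algebra_simps)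
    show "0 \<le> r" using r by simp
    show "0 < c * (c + r) * (c * c / 2)" using p cr2 c by (intro mult_pos_pos) auto
  qed
  also have "r/(c*c/2) \<le> \<eta>/4"
    using c r by (subst pos_divide_le_eq) (auto simp: power2_eq_square field_simps)
  finally show "1/c - \<eta>/4 \<le> 1/(c + r)" using e2 by linarith
qed

lemma outer_bound:
  fixes h :: "real \<Rightarrow> real"
  assumes e: "0 < \<epsilon>" "\<epsilon> \<le> \<delta>" and cont: "continuous_on {0<..\<delta>} h"
    and pos: "\<And>s. s \<in> {0<..\<delta>} \<Longrightarrow> h s > 0"
  shows "\<exists>M\<ge>0. \<forall>k. \<bar>integral {\<epsilon>..\<delta>} (\<lambda>t. ln (h t) ^ k)\<bar> \<le> M ^ k * (\<delta> - \<epsilon>)"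
proof -
  have sub: "{\<epsilon>..\<delta>} \<subseteq> {0<..\<delta>}" using e by auto
  have hne: "h x \<noteq> 0" if "x \<in> {\<epsilon>..\<delta>}" for x
  proof -
    have "x \<in> {0<..\<delta>}" using that sub by blast
    then have "h x > 0" by (rule pos)
    then show ?thesis by simp
  qed
  have cl: "continuous_on {\<epsilon>..\<delta>} (\<lambda>t. ln (h t))"
    by (intro continuous_on_ln continuous_on_subset[OF cont sub]) (use hne in blast)
  obtain B where B: "B \<ge> 0" "\<And>x. x \<in> {\<epsilon>..\<delta>} \<Longrightarrow> norm (ln (h x)) \<le> B"
    using continuous_on_compact_bound[OF compact_Icc cl] by blast
  have b1: "\<bar>integral {\<epsilon>..\<delta>} (\<lambda>t. ln (h t) ^ k)\<bar> \<le> B ^ k * (\<delta> - \<epsilon>)" for k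
  proof -
    have "norm (integral {\<epsilon>..\<delta>} (\<lambda>t. ln (h t) ^ k)) \<le> B ^ k * (\<delta> - \<epsilon>)"
    proof (rule integral_bound)
      show "\<epsilon> \<le> \<delta>" by (rule e(2))
      show "continuous_on {\<epsilon>..\<delta>} (\<lambda>t. ln (h t) ^ k)" by (intro continuous_intros cl)
      fix t assume t: "t \<in> {\<epsilon>..\<delta>}"
      have "\<bar>ln (h t)\<bar> ^ k \<le> B ^ k" using B(2)[OF t] by (intro power_mono) auto
      then show "norm (ln (h t) ^ k) \<le> B ^ k" by (simp add: power_abs)
    qed
    then show ?thesis by simp
  qed
  have b2: "(\<lambda>t. ln (h t) ^ k) integrable_on {\<epsilon>..\<delta>}" for k
    by (intro integrable_continuous_real continuous_intros cl)
  show ?thesis by (rule exI[of _ B]) (use B(1) b1 in simp)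
qed

lemma outer_integrable:
  fixes h :: "real \<Rightarrow> real"
  assumes e: "0 < \<epsilon>" "\<epsilon> \<le> \<delta>" and cont: "continuous_on {0<..\<delta>} h"
    and pos: "\<And>s. s \<in> {0<..\<delta>} \<Longrightarrow> h s > 0"
  shows "(\<lambda>t. ln (h t) ^ k) integrable_on {\<epsilon>..\<delta>}"
proof -
  have sub: "{\<epsilon>..\<delta>} \<subseteq> {0<..\<delta>}" using e by auto
  have hne: "h x \<noteq> 0" if "x \<in> {\<epsilon>..\<delta>}" for x
  proof -
    have "x \<in> {0<..\<delta>}" using that sub by blast
    then have "h x > 0" by (rule pos)
    then show ?thesis by simp
  qed
  have cl: "continuous_on {\<epsilon>..\<delta>} (\<lambda>t. ln (h t))"
    by (intro continuous_on_ln continuous_on_subset[OF cont sub]) (use hne in blast)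
  show ?thesis by (intro integrable_continuous_real continuous_intros cl)
qed

lemma pow_fact_zero: "(\<lambda>k. M ^ k / fact k :: real) \<longlonglongrightarrow> 0"
proof -
  have "summable (\<lambda>k. M ^ k /\<^sub>R fact k)" using exp_converges[of M] by (rule sums_summable)
  from summable_LIMSEQ_zero[OF this] have "(\<lambda>k. M ^ k /\<^sub>R fact k) \<longlonglongrightarrow> 0" .
  moreover have "(\<lambda>k. M ^ k /\<^sub>R fact k) = (\<lambda>k. M ^ k / fact k)"
    by (rule ext) (simp add: divide_inverse mult.commute)
  ultimately show ?thesis by simp
qed

lemma one_side_integrable:
  fixes h :: "real \<Rightarrow> real" and c \<delta> :: real
  assumes c: "c > 0" and d: "\<delta> > 0" and cont: "continuous_on {0<..\<delta>} h"
    and pos: "\<And>s. s \<in> {0<..\<delta>} \<Longrightarrow> h s > 0"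
    and lim: "((\<lambda>s. h s / s) \<longlongrightarrow> c) (at_right 0)"
  shows "(\<lambda>t. ln (h t) ^ k) integrable_on {0..\<delta>}"
proof -
  obtain \<epsilon> where e: "0 < \<epsilon>" "\<epsilon> \<le> \<delta>" "(c + c/2) * \<epsilon> < 1"
    "\<forall>s\<in>{0<..\<epsilon>}. (c - c/2) * s \<le> h s \<and> h s \<le> (c + c/2) * s"
    using sandwich_eps[OF c _ _ d lim, of "c/2"] c by auto
  have sub: "{0<..\<epsilon>} \<subseteq> {0<..\<delta>}" using e by auto
  have "(\<lambda>t. ln (h t) ^ k) integrable_on {0<..\<epsilon>}"
    by (rule inner_integrable(1)[of "c/2" c \<epsilon> h]) (use c e continuous_on_subset[OF cont sub] in auto)
  then have i1: "(\<lambda>t. ln (h t) ^ k) integrable_on {0..\<epsilon>}" using spike0_integrable by blast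
  have i2: "(\<lambda>t. ln (h t) ^ k) integrable_on {\<epsilon>..\<delta>}"
    by (rule outer_integrable[OF e(1,2) cont pos])
  show ?thesis by (rule Henstock_Kurzweil_Integration.integrable_combine[OF _ _ i1 i2]) (use e in auto)
qed

lemma final_ineq:
  fixes a g1 g2 b y1 y2 c \<eta> :: real
  assumes "a \<le> g1" "g2 \<le> a" "\<bar>b\<bar> < \<eta>/4" "\<bar>g1 - y1\<bar> < \<eta>/4" "\<bar>g2 - y2\<bar> < \<eta>/4"
    "y1 \<le> c + \<eta>/4" "c - \<eta>/4 \<le> y2"
  shows "\<bar>a + b - c\<bar> < \<eta>"
  using assms(1,2,6,7) assms(3-5)[unfolded abs_less_iff] unfolding abs_less_iff by linarith

lemma one_side_limit:
  fixes h :: "real \<Rightarrow> real" and c \<delta> :: real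
  assumes c: "c > 0" and d: "\<delta> > 0" and cont: "continuous_on {0<..\<delta>} h"
    and pos: "\<And>s. s \<in> {0<..\<delta>} \<Longrightarrow> h s > 0"
    and lim: "((\<lambda>s. h s / s) \<longlongrightarrow> c) (at_right 0)"
  shows "(\<lambda>k. (-1)^k * integral {0..\<delta>} (\<lambda>t. ln (h t) ^ k) / fact k) \<longlonglongrightarrow> 1/c"
proof (rule LIMSEQ_I)
  fix \<eta> :: real assume eta: "\<eta> > 0"
  define r where "r = min (c/2) (\<eta> * c^2 / 8)"
  have r: "0 < r" "r \<le> c/2" "r \<le> \<eta> * c^2 / 8" "r < c" using c eta by (auto simp: r_def)
  obtain \<epsilon> where e: "0 < \<epsilon>" "\<epsilon> \<le> \<delta>" "(c + r) * \<epsilon> < 1"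
    "\<forall>s\<in>{0<..\<epsilon>}. (c - r) * s \<le> h s \<and> h s \<le> (c + r) * s"
    using sandwich_eps[OF c r(1) r(4) d lim] by auto
  have sub: "{0<..\<epsilon>} \<subseteq> {0<..\<delta>}" using e by auto
  have cont': "continuous_on {0<..\<epsilon>} h" using continuous_on_subset[OF cont sub] .
  note inn = inner_integrable[OF r(1) r(4) e(1) e(3) e(4) cont']
  obtain M where M: "M \<ge> 0" "\<And>k. \<bar>integral {\<epsilon>..\<delta>} (\<lambda>t. ln (h t) ^ k)\<bar> \<le> M ^ k * (\<delta> - \<epsilon>)"
    using outer_bound[OF e(1,2) cont pos] by auto
  have "(\<lambda>k. G (c - r) k \<epsilon> / fact k) \<longlonglongrightarrow> 1/(c - r)" using r e by (intro G_limit) auto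
  from LIMSEQ_D[OF this, of "\<eta>/4"] eta obtain N1 where
    N1: "\<And>k. k \<ge> N1 \<Longrightarrow> \<bar>G (c - r) k \<epsilon> / fact k - 1/(c - r)\<bar> < \<eta>/4" by auto
  have "(\<lambda>k. G (c + r) k \<epsilon> / fact k) \<longlonglongrightarrow> 1/(c + r)" using r e c by (intro G_limit) auto
  from LIMSEQ_D[OF this, of "\<eta>/4"] eta obtain N2 where
    N2: "\<And>k. k \<ge> N2 \<Longrightarrow> \<bar>G (c + r) k \<epsilon> / fact k - 1/(c + r)\<bar> < \<eta>/4" by auto
  have "(\<lambda>k. (\<delta> - \<epsilon>) * (M ^ k / fact k)) \<longlonglongrightarrow> (\<delta> - \<epsilon>) * 0"
    by (intro tendsto_mult tendsto_const pow_fact_zero)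
  from LIMSEQ_D[OF this, of "\<eta>/4"] eta obtain N3 where
    N3: "\<And>k. k \<ge> N3 \<Longrightarrow> \<bar>(\<delta> - \<epsilon>) * (M ^ k / fact k)\<bar> < \<eta>/4" by auto
  note rb = recip_bounds[OF c r(1-3)]
  show "\<exists>no. \<forall>n\<ge>no. norm ((-1)^n * integral {0..\<delta>} (\<lambda>t. ln (h t) ^ n) / fact n - 1/c) < \<eta>"
  proof (intro exI allI impI)
    fix k assume k: "k \<ge> max N1 (max N2 N3)"
    define A where "A = integral {0<..\<epsilon>} (\<lambda>t. (- ln (h t)) ^ k)"
    define B where "B = integral {\<epsilon>..\<delta>} (\<lambda>t. ln (h t) ^ k)"
    have fk: "fact k > (0::real)" by simp
    have int_all: "(\<lambda>t. ln (h t) ^ k) integrable_on {0..\<delta>}"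
      by (rule one_side_integrable[OF c d cont pos lim])
    have split: "integral {0..\<delta>} (\<lambda>t. ln (h t) ^ k) =
        integral {0..\<epsilon>} (\<lambda>t. ln (h t) ^ k) + B"
      unfolding B_def using Henstock_Kurzweil_Integration.integral_combine[OF _ _ int_all, of \<epsilon>] e by simp
    have "(-1)^k * integral {0..\<epsilon>} (\<lambda>t. ln (h t) ^ k) = (-1)^k * integral {0<..\<epsilon>} (\<lambda>t. ln (h t) ^ k)"
      by (simp add: spike0_integral)
    also have "\<dots> = integral {0<..\<epsilon>} (\<lambda>t. (-1)^k * ln (h t) ^ k)"
      by (rule integral_mult[OF inn(1)])
    also have "\<dots> = A" unfolding A_def
      by (rule integral_cong) (rule power_minus[symmetric])
    finally have inA: "(-1)^k * integral {0..\<epsilon>} (\<lambda>t. ln (h t) ^ k) = A" .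
    have X: "(-1)^k * integral {0..\<delta>} (\<lambda>t. ln (h t) ^ k) / fact k = A / fact k + (-1)^k * B / fact k"
      using inA unfolding split by (simp add: distrib_left add_divide_distrib)
    have a1: "A / fact k \<le> G (c - r) k \<epsilon> / fact k" using inn(4) fk unfolding A_def
      by (intro divide_right_mono) auto
    have a2: "G (c + r) k \<epsilon> / fact k \<le> A / fact k" using inn(3) fk unfolding A_def
      by (intro divide_right_mono) auto
    have "\<bar>(-1)^k * B / fact k\<bar> = \<bar>B\<bar> / fact k" by (simp add: abs_mult power_abs)
    also have "\<dots> \<le> M ^ k * (\<delta> - \<epsilon>) / fact k" using M(2)[of k] fk unfolding B_def
      by (intro divide_right_mono) auto
    also have "\<dots> = (\<delta> - \<epsilon>) * (M ^ k / fact k)" by simp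
    also have "\<dots> < \<eta>/4"
      using N3[of k] k abs_ge_self[of "(\<delta> - \<epsilon>) * (M ^ k / fact k)"] by linarith
    finally have a3: "\<bar>(-1)^k * B / fact k\<bar> < \<eta>/4" .
    have b1: "\<bar>G (c - r) k \<epsilon> / fact k - 1/(c - r)\<bar> < \<eta>/4" using N1 k by simp
    have b2: "\<bar>G (c + r) k \<epsilon> / fact k - 1/(c + r)\<bar> < \<eta>/4" using N2 k by simp
    show "norm ((-1)^k * integral {0..\<delta>} (\<lambda>t. ln (h t) ^ k) / fact k - 1/c) < \<eta>"
      unfolding X real_norm_def by (rule final_ineq[OF a1 a2 a3 b1 b2 rb])
  qed
qed

theorem lemma4:
  fixes Q :: "complex poly" and m :: nat and t0 :: real
  defines "P \<equiv> laurent_poly Q m"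
  assumes "Q \<noteq> 0"
    and "laurent_root_order Q m (exp (2 * pi * \<i> * of_real t0)) = 1"
  shows "\<exists>\<delta>0>0. \<forall>\<delta>. 0 < \<delta> \<and> \<delta> < \<delta>0 \<longrightarrow>
    ((\<lambda>k. \<bar>integral {t0 - \<delta>..t0 + \<delta>}
              (\<lambda>t. (ln (cmod (P (exp (2 * pi * \<i> * of_real t))))) ^ k)\<bar> / fact k)
      \<longlonglongrightarrow> 1 / (pi * cmod (deriv P (exp (2 * pi * \<i> * of_real t0)))))"
proof -
  define z0 where "z0 = exp (2 * pi * \<i> * of_real t0)"
  have Pz: "P = (\<lambda>z. poly Q z / z ^ m)" unfolding P_def laurent_poly_def by (rule ext) simp
  have ord: "order z0 Q = 1" using assms(3) unfolding laurent_root_order_def z0_def .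
  have Q0: "poly Q z0 = 0" using ord assms(2) order_root by (metis one_neq_zero)
  have dQ: "poly (pderiv Q) z0 \<noteq> 0"
  proof
    assume h: "poly (pderiv Q) z0 = 0"
    have o: "order z0 Q = Suc (order z0 (pderiv Q))" by (rule order_pderiv[OF assms(2) Q0])
    show False
    proof (cases "pderiv Q = 0")
      case True
      then have "degree Q = 0" by (simp add: pderiv_eq_0_iff)
      then obtain a where "Q = pCons a 0" by (rule degree_eq_zeroE)
      then show False using Q0 assms(2) by simp
    next
      case False
      then have "order z0 (pderiv Q) \<noteq> 0" using h order_root by blast
      then show False using o ord by simp
    qed
  qed
  have nz0: "norm z0 = 1" unfolding z0_def by (simp add: norm_exp_eq_Re)
  have z0ne: "z0 \<noteq> 0" unfolding z0_def by simp
  define Dp where "Dp = poly (pderiv Q) z0 / z0 ^ m"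
  have dP: "(P has_field_derivative Dp) (at z0)"
  proof -
    have "((\<lambda>z. poly Q z / z ^ m) has_field_derivative Dp) (at z0)"
      by (rule DERIV_cong[OF DERIV_divide[OF poly_DERIV DERIV_power[OF DERIV_ident]]])
         (use z0ne Q0 in \<open>simp_all add: Dp_def\<close>)
    then show ?thesis unfolding Pz .
  qed
  have derivP: "deriv P z0 = Dp" by (rule DERIV_imp_deriv[OF dP])
  have Dpne: "Dp \<noteq> 0" using dQ z0ne by (simp add: Dp_def)
  define D where "D = Dp * (z0 * (2 * pi * \<i>))"
  have dE: "((\<lambda>w. exp (2 * pi * \<i> * w)) has_field_derivative z0 * (2 * pi * \<i>)) (at (of_real t0))"
    unfolding z0_def by (auto intro!: derivative_eq_intros)
  have dpsi: "((\<lambda>w. P (exp (2 * pi * \<i> * w))) has_field_derivative D) (at (of_real t0))"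
    unfolding D_def using DERIV_chain2[OF dP[unfolded z0_def] dE[unfolded z0_def]] by (simp add: z0_def)
  have vd: "((\<lambda>t. P (exp (2 * pi * \<i> * of_real t))) has_vector_derivative D) (at t0)"
    by (rule has_vector_derivative_real_field[OF dpsi])
  define g where "g t = cmod (P (exp (2 * pi * \<i> * of_real t)))" for t
  define C where "C = cmod D"
  have C: "C = 2 * pi * cmod (deriv P z0)"
    unfolding C_def D_def derivP by (simp add: norm_mult nz0)
  have Cpos: "C > 0" unfolding C using Dpne derivP by simp
  have phi0: "P z0 = 0" using Q0 Pz by simp
  have L: "((\<lambda>t. g t / \<bar>t - t0\<bar>) \<longlongrightarrow> C) (at t0)"
  proof -
    let ?\<phi> = "\<lambda>t. P (exp (2 * pi * \<i> * of_real t))"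
    from vd have "(?\<phi> has_derivative (\<lambda>x. x *\<^sub>R D)) (at t0)" by (simp add: has_vector_derivative_def)
    then have lim0: "((\<lambda>y. norm ((?\<phi> y - ?\<phi> t0) - (y - t0) *\<^sub>R D) / norm (y - t0)) \<longlongrightarrow> 0) (at t0)"
      by (simp add: has_derivative_iff_norm)
    have pt: "norm (g t / \<bar>t - t0\<bar> - C) \<le> norm ((?\<phi> t - ?\<phi> t0) - (t - t0) *\<^sub>R D) / norm (t - t0)"
      if t: "t \<noteq> t0" for t
    proof -
      have p0: "?\<phi> t0 = 0" using phi0 by (simp add: z0_def)
      have d: "\<bar>t - t0\<bar> > 0" using t by simp
      have nD: "norm ((t - t0) *\<^sub>R D) = \<bar>t - t0\<bar> * C" by (simp add: C_def)
      have "g t / \<bar>t - t0\<bar> - C = (norm (?\<phi> t) - norm ((t - t0) *\<^sub>R D)) / \<bar>t - t0\<bar>"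
        unfolding nD using d by (simp add: g_def field_simps)
      then have "norm (g t / \<bar>t - t0\<bar> - C) = \<bar>norm (?\<phi> t) - norm ((t - t0) *\<^sub>R D)\<bar> / \<bar>t - t0\<bar>"
        by simp
      also have "\<dots> \<le> norm (?\<phi> t - (t - t0) *\<^sub>R D) / \<bar>t - t0\<bar>"
        by (rule divide_right_mono[OF norm_triangle_ineq3]) simp
      finally show ?thesis using p0 by simp
    qed
    have "((\<lambda>t. g t / \<bar>t - t0\<bar> - C) \<longlongrightarrow> 0) (at t0)"
    proof (rule Lim_null_comparison[OF _ lim0])
      show "\<forall>\<^sub>F t in at t0. norm (g t / \<bar>t - t0\<bar> - C) \<le> norm ((?\<phi> t - ?\<phi> t0) - (t - t0) *\<^sub>R D) / norm (t - t0)"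
        unfolding eventually_at_filter by (rule always_eventually) (use pt in blast)
    qed
    then show ?thesis by (rule LIM_zero_cancel)
  qed
  have "\<forall>\<^sub>F t in at t0. C/2 < g t / \<bar>t - t0\<bar>" by (rule order_tendstoD(1)[OF L]) (use Cpos in simp)
  then obtain d where d: "d > 0" "\<And>t. t \<noteq> t0 \<Longrightarrow> dist t t0 < d \<Longrightarrow> C/2 < g t / \<bar>t - t0\<bar>"
    unfolding eventually_at by auto
  have gpos: "g t > 0" if "t \<noteq> t0" "\<bar>t - t0\<bar> < d" for t
  proof -
    have "C/2 < g t / \<bar>t - t0\<bar>" using d(2)[of t] that by (simp add: dist_real_def)
    moreover have "\<bar>t - t0\<bar> > 0" using that by simp
    ultimately have "0 < g t / \<bar>t - t0\<bar>" "0 < \<bar>t - t0\<bar>" using Cpos by linarith+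
    then show ?thesis by (simp add: zero_less_divide_iff)
  qed
  have contg: "continuous_on S (\<lambda>s. g (f s))" if "continuous_on S f" for f :: "real \<Rightarrow> real" and S
    unfolding g_def Pz by (intro continuous_intros that) simp
  show ?thesis
  proof (intro exI[of _ d] conjI allI impI)
    show "d > 0" by (rule d(1))
    fix \<delta> :: real assume \<delta>: "0 < \<delta> \<and> \<delta> < d"
    define h1 where "h1 s = g (t0 + s)" for s
    define h2 where "h2 s = g (t0 - s)" for s
    have cont1: "continuous_on {0<..\<delta>} h1" unfolding h1_def by (intro contg continuous_intros)
    have cont2: "continuous_on {0<..\<delta>} h2" unfolding h2_def by (intro contg continuous_intros)
    have pos1: "h1 s > 0" if "s \<in> {0<..\<delta>}" for s unfolding h1_def using that \<delta> by (intro gpos) auto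
    have pos2: "h2 s > 0" if "s \<in> {0<..\<delta>}" for s unfolding h2_def using that \<delta> by (intro gpos) auto
    have f1: "filterlim (\<lambda>s. t0 + s) (at t0) (at_right 0)"
      unfolding filterlim_at
      by (auto intro!: tendsto_eq_intros eventually_mono[OF eventually_at_right_less])
    have f2: "filterlim (\<lambda>s. t0 - s) (at t0) (at_right 0)"
      unfolding filterlim_at
      by (auto intro!: tendsto_eq_intros eventually_mono[OF eventually_at_right_less])
    have lim1: "((\<lambda>s. h1 s / s) \<longlongrightarrow> C) (at_right 0)"
      using filterlim_compose[OF L f1]
      by (rule Lim_transform_eventually) (auto simp: h1_def intro!: eventually_mono[OF eventually_at_right_less])
    have lim2: "((\<lambda>s. h2 s / s) \<longlongrightarrow> C) (at_right 0)"
      using filterlim_compose[OF L f2]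
      by (rule Lim_transform_eventually) (auto simp: h2_def intro!: eventually_mono[OF eventually_at_right_less])
    have dpos: "\<delta> > 0" using \<delta> by simp
    define F where "F k t = ln (g t) ^ k" for k t
    have IR: "integral {t0..t0 + \<delta>} (F k) = integral {0..\<delta>} (\<lambda>t. ln (h1 t) ^ k)" for k
      using integral_shift_Icc_real[of 0 \<delta> "F k" t0] by (simp add: o_def F_def h1_def add.commute)
    have iR: "F k integrable_on {t0..t0 + \<delta>}" for k
      using integrable_on_shift_Icc_real[of "F k" t0 0 \<delta>] one_side_integrable[OF Cpos dpos cont1 pos1 lim1, of k]
      by (simp add: o_def F_def h1_def add.commute)
    have IL: "integral {t0 - \<delta>..t0} (F k) = integral {0..\<delta>} (\<lambda>t. ln (h2 t) ^ k)" for k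
    proof -
      have "integral {-\<delta>..0} (F k \<circ> (+) t0) = integral {-\<delta>+t0..0+t0} (F k)"
        by (rule integral_shift_Icc_real)
      moreover have "integral {-0..-(-\<delta>)} (\<lambda>x. (F k \<circ> (+) t0) (-x)) = integral {-\<delta>..0} (F k \<circ> (+) t0)"
        by (rule Henstock_Kurzweil_Integration.integral_reflect_real)
      ultimately show ?thesis by (simp add: o_def F_def h2_def)
    qed
    have iL: "F k integrable_on {t0 - \<delta>..t0}" for k
    proof -
      have "(\<lambda>t. ln (h2 t) ^ k) integrable_on {0..\<delta>}"
        by (rule one_side_integrable[OF Cpos dpos cont2 pos2 lim2])
      then have "(\<lambda>x. (F k \<circ> (+) t0) (-x)) integrable_on {-0..-(-\<delta>)}" by (simp add: o_def F_def h2_def)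
      then have "(F k \<circ> (+) t0) integrable_on {-\<delta>..0}"
        using Henstock_Kurzweil_Integration.integrable_reflect_real by blast
      then show ?thesis using integrable_on_shift_Icc_real[of "F k" t0 "-\<delta>" 0] by simp
    qed
    have Isplit: "integral {t0 - \<delta>..t0 + \<delta>} (F k) = integral {0..\<delta>} (\<lambda>t. ln (h2 t) ^ k) + integral {0..\<delta>} (\<lambda>t. ln (h1 t) ^ k)" for k
    proof -
      have "F k integrable_on {t0 - \<delta>..t0 + \<delta>}"
        by (rule Henstock_Kurzweil_Integration.integrable_combine[OF _ _ iL iR]) (use dpos in auto)
      then have "integral {t0 - \<delta>..t0} (F k) + integral {t0..t0 + \<delta>} (F k) = integral {t0 - \<delta>..t0 + \<delta>} (F k)"
        by (intro Henstock_Kurzweil_Integration.integral_combine) (use dpos in auto)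
      then show ?thesis using IL IR by simp
    qed
    note l1 = one_side_limit[OF Cpos dpos cont1 pos1 lim1]
    note l2 = one_side_limit[OF Cpos dpos cont2 pos2 lim2]
    define I1 where "I1 k = integral {0..\<delta>} (\<lambda>t. ln (h1 t) ^ k)" for k
    define I2 where "I2 k = integral {0..\<delta>} (\<lambda>t. ln (h2 t) ^ k)" for k
    have "(\<lambda>k. (-1)^k * I2 k / fact k + (-1)^k * I1 k / fact k) \<longlonglongrightarrow> 1/C + 1/C"
      unfolding I1_def I2_def by (rule tendsto_add[OF l2 l1])
    then have lim: "(\<lambda>k. \<bar>(-1)^k * I2 k / fact k + (-1)^k * I1 k / fact k\<bar>) \<longlonglongrightarrow> \<bar>1/C + 1/C\<bar>"
      by (rule tendsto_rabs)
    have eq: "\<bar>(-1)^k * I2 k / fact k + (-1)^k * I1 k / fact k\<bar> =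
        \<bar>integral {t0 - \<delta>..t0 + \<delta>} (\<lambda>t. (ln (cmod (P (exp (2 * pi * \<i> * of_real t))))) ^ k)\<bar> / fact k" for k
    proof -
      have Fk: "(\<lambda>t. (ln (cmod (P (exp (2 * pi * \<i> * of_real t))))) ^ k) = F k"
        by (rule ext) (simp add: F_def g_def)
      have "(-1)^k * I2 k / fact k + (-1)^k * I1 k / fact k = (-1)^k * (I2 k + I1 k) / fact k"
        by (simp add: distrib_left add_divide_distrib)
      then have "\<bar>(-1)^k * I2 k / fact k + (-1)^k * I1 k / fact k\<bar> = \<bar>I2 k + I1 k\<bar> / fact k"
        by (simp add: abs_mult power_abs)
      then show ?thesis unfolding Fk Isplit I1_def I2_def .
    qed
    have val: "\<bar>1/C + 1/C\<bar> = 1 / (pi * cmod (deriv P (exp (2 * pi * \<i> * of_real t0))))"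
      using Cpos unfolding C z0_def by simp
    show "(\<lambda>k. \<bar>integral {t0 - \<delta>..t0 + \<delta>} (\<lambda>t. (ln (cmod (P (exp (2 * pi * \<i> * of_real t))))) ^ k)\<bar> / fact k)
      \<longlonglongrightarrow> 1 / (pi * cmod (deriv P (exp (2 * pi * \<i> * of_real t0))))"
      using lim unfolding eq val .
  qed
qed

end
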